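(* Let $A$ and $Z$ be $n\times n$ complex matrices with $0\le A\le I$ and $Z$ positive definite with largest eigenvalue $a$ and smallest eigenvalue $b$. Then $$AZA \le \frac{(a+b)^2}{4ab}\, Z.$$
   Context: $\le$ denotes the Loewner order on Hermitian matrices: $X\le Y$ means $Y-X$ is positive semidefinite. *)

theory Defs
  imports "HOL-Analysis.Analysis"
begin

definition cquad :: "complex^'n^'n \<Rightarrow> complex^'n \<Rightarrow> complex" where
  "cquad M x = (\<Sum>i\<in>UNIV. cnj (x $ i) * (M *v x) $ i)"

definition hermitian_mat :: "complex^'n^'n \<Rightarrow> bool" where
  "hermitian_mat M \<longleftrightarrow> (\<forall>i j. M $ i $ j = cnj (M $ j $ i))"

definition psd_mat :: "complex^'n^'n \<Rightarrow> bool" where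
  "psd_mat M \<longleftrightarrow> hermitian_mat M \<and> (\<forall>x. 0 \<le> Re (cquad M x))"

definition pd_mat :: "complex^'n^'n \<Rightarrow> bool" where
  "pd_mat M \<longleftrightarrow> hermitian_mat M \<and> (\<forall>x. x \<noteq> 0 \<longrightarrow> 0 < Re (cquad M x))"

definition loewner_le :: "complex^'n^'n \<Rightarrow> complex^'n^'n \<Rightarrow> bool" where
  "loewner_le X Y \<longleftrightarrow> psd_mat (Y - X)"

definition mat_eigenvalue :: "complex^'n^'n \<Rightarrow> complex \<Rightarrow> bool" where
  "mat_eigenvalue M l \<longleftrightarrow> (\<exists>v. v \<noteq> 0 \<and> M *v v = l *s v)"

end

theory Submission
  imports Defs
begin
definition cinner :: "complex^'n \<Rightarrow> complex^'n \<Rightarrow> complex" where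
  "cinner p q = (\<Sum>i\<in>UNIV. cnj (p $ i) * q $ i)"

lemma cinner_add_left: "cinner (p + q) r = cinner p r + cinner q r"
  by (simp add: cinner_def distrib_right sum.distrib)
lemma cinner_add_right: "cinner r (p + q) = cinner r p + cinner r q"
  by (simp add: cinner_def distrib_left sum.distrib)
lemma cinner_diff_left: "cinner (p - q) r = cinner p r - cinner q r"
  by (simp add: cinner_def left_diff_distrib sum_subtractf)
lemma cinner_diff_right: "cinner r (p - q) = cinner r p - cinner r q"
  by (simp add: cinner_def right_diff_distrib sum_subtractf)
lemma cinner_scale_left: "cinner (c *s p) r = cnj c * cinner p r"
  by (simp add: cinner_def sum_distrib_left mult.assoc)
lemma cinner_scale_right: "cinner r (c *s p) = c * cinner r p"
  by (simp add: cinner_def sum_distrib_left mult.left_commute)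
lemma cinner_zero_left[simp]: "cinner 0 r = 0" by (simp add: cinner_def)
lemma cinner_zero_right[simp]: "cinner r 0 = 0" by (simp add: cinner_def)
lemma cinner_commute: "cinner q p = cnj (cinner p q)"
  by (simp add: cinner_def mult.commute)

lemma cinner_self: "cinner p p = complex_of_real ((norm p)^2)"
proof -
  have "(norm p)^2 = (\<Sum>i\<in>UNIV. (cmod (p $ i))^2)"
    by (simp add: norm_vec_def L2_set_def sum_nonneg)
  then show ?thesis
  proof -
    have "cinner p p = (\<Sum>i\<in>UNIV. complex_of_real ((cmod (p $ i))^2))"
      unfolding cinner_def by (rule sum.cong, simp, metis complex_norm_square mult.commute)
    also have "\<dots> = complex_of_real (\<Sum>i\<in>UNIV. (cmod (p $ i))^2)" by simp
    finally show ?thesis using \<open>(norm p)^2 = _\<close> by simp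
  qed
qed

lemma cinner_self_Re: "Re (cinner p p) = (norm p)^2"
  by (simp add: cinner_self)

lemma cquad_cinner: "cquad M x = cinner x (M *v x)"
  by (simp add: cquad_def cinner_def)

lemma herm_adj:
  assumes "hermitian_mat M"
  shows "cinner p (M *v q) = cinner (M *v p) q"
proof -
  have "cinner p (M *v q) = (\<Sum>i\<in>UNIV. \<Sum>j\<in>UNIV. cnj (p $ i) * (M $ i $ j * q $ j))"
    by (simp add: cinner_def matrix_vector_mult_def sum_distrib_left)
  also have "\<dots> = (\<Sum>j\<in>UNIV. \<Sum>i\<in>UNIV. cnj (p $ i) * (M $ i $ j * q $ j))"
    by (rule sum.swap)
  also have "\<dots> = cinner (M *v p) q"
  proof -
    have h: "\<And>i j. cnj (M$j$i) = M$i$j" using assms unfolding hermitian_mat_def by (metis complex_cnj_cnj)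
    show ?thesis
      by (simp add: cinner_def matrix_vector_mult_def sum_distrib_right sum_distrib_left h mult_ac)
  qed
  finally show ?thesis .
qed

lemma mv_scale: "(M::complex^'n^'m) *v (c *s x) = c *s (M *v x)"
  by (simp add: matrix_vector_mult_def vec_eq_iff sum_distrib_left mult_ac)

definition sadj :: "(complex^'n \<Rightarrow> complex^'n) \<Rightarrow> bool" where
  "sadj F \<longleftrightarrow> (\<forall>p q. F (p + q) = F p + F q) \<and> (\<forall>c p. F (c *s p) = c *s F p)
     \<and> (\<forall>p q. cinner p (F q) = cinner (F p) q)"

definition posf :: "(complex^'n \<Rightarrow> complex^'n) \<Rightarrow> bool" where
  "posf F \<longleftrightarrow> (\<forall>p. 0 \<le> Re (cinner p (F p)))"

lemma sadj_swap: "sadj F \<Longrightarrow> cinner q (F p) = cnj (cinner p (F q))"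
  unfolding sadj_def by (metis cinner_commute)

lemma quad_expand:
  assumes "sadj F"
  shows "Re (cinner (p + s *s q) (F (p + s *s q))) =
     Re (cinner p (F p)) + 2 * Re (s * cinner p (F q)) + (cmod s)^2 * Re (cinner q (F q))"
proof -
  have lin: "F (p + s *s q) = F p + s *s F q" using assms unfolding sadj_def by simp
  have sw: "cinner q (F p) = cnj (cinner p (F q))" using sadj_swap[OF assms] .
  have ss: "cnj s * s = complex_of_real ((cmod s)^2)"
    by (metis complex_norm_square mult.commute)
  have "cinner (p + s *s q) (F (p + s *s q)) =
     cinner p (F p) + s * cinner p (F q) + cnj s * cinner q (F p) + (cnj s * s) * cinner q (F q)"
    unfolding lin by (simp add: cinner_add_left cinner_add_right cinner_scale_left cinner_scale_right algebra_simps)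
  also have "\<dots> = cinner p (F p) + s * cinner p (F q) + cnj (s * cinner p (F q)) + complex_of_real ((cmod s)^2) * cinner q (F q)"
    unfolding sw ss by simp
  finally show ?thesis by simp
qed

lemma cs_form:
  assumes "sadj F" "posf F"
  shows "(cmod (cinner p (F q)))^2 \<le> Re (cinner p (F p)) * Re (cinner q (F q))"
proof -
  define z where "z = cinner p (F q)"
  define al where "al = Re (cinner p (F p))"
  define ga where "ga = Re (cinner q (F q))"
  have al0: "0 \<le> al" and ga0: "0 \<le> ga" using assms(2) unfolding posf_def al_def ga_def by auto
  have key: "0 \<le> al - 2 * t * (cmod z)^2 + t^2 * (cmod z)^2 * ga" for t :: real
  proof -
    define s where "s = - (complex_of_real t * cnj z)"
    have "0 \<le> Re (cinner (p + s *s q) (F (p + s *s q)))" using assms(2) unfolding posf_def by blast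
    also have "\<dots> = al + 2 * Re (s * z) + (cmod s)^2 * ga"
      using quad_expand[OF assms(1)] unfolding al_def ga_def z_def by blast
    also have "Re (s * z) = - t * (cmod z)^2"
      unfolding s_def by (simp add: mult.assoc complex_norm_square[symmetric] mult.commute[of "cnj z"])
    also have "(cmod s)^2 = t^2 * (cmod z)^2"
      unfolding s_def by (simp add: norm_mult power_mult_distrib)
    finally show ?thesis by (simp add: algebra_simps)
  qed
  show ?thesis
  proof (cases "z = 0")
    case True then show ?thesis using al0 ga0 unfolding z_def al_def ga_def by simp
  next
    case False
    then have zp: "0 < (cmod z)^2" by simp
    show ?thesis
    proof (cases "ga = 0")
      case True
      have "0 \<le> al - 2 * ((al + 1) / (2 * (cmod z)^2)) * (cmod z)^2"
        using key[of "(al + 1) / (2 * (cmod z)^2)"] True by simp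
      then have False using zp by (simp add: field_simps)
      then show ?thesis ..
    next
      case False
      then have gp: "0 < ga" using ga0 by simp
      have "0 \<le> al - 2 * (1/ga) * (cmod z)^2 + (1/ga)^2 * (cmod z)^2 * ga" using key[of "1/ga"] .
      then have "0 \<le> al - (cmod z)^2 / ga" using gp by (simp add: field_simps power2_eq_square)
      then have "(cmod z)^2 \<le> al * ga" using gp by (simp add: field_simps)
      then show ?thesis unfolding z_def al_def ga_def .
    qed
  qed
qed

lemma sq_bound:
  assumes "sadj F" "posf F" "\<forall>v. Re (cinner v (F v)) \<le> c * (norm v)^2"
  shows "(norm (F v))^2 \<le> c * Re (cinner v (F v))"
proof -
  define R where "R = Re (cinner v (F v))"
  have R0: "0 \<le> R" using assms(2) unfolding posf_def R_def by auto
  have cR: "0 \<le> c * R"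
  proof (cases "c < 0")
    case True
    have "R \<le> c * (norm v)^2" using assms(3) unfolding R_def by blast
    also have "\<dots> \<le> 0" using True by (simp add: mult_nonpos_nonneg)
    finally show ?thesis using R0 by simp
  next
    case False then show ?thesis using R0 by simp
  qed
  have "(cmod (cinner (F v) (F v)))^2 \<le> Re (cinner (F v) (F (F v))) * R"
    using cs_form[OF assms(1,2), of "F v" v] unfolding R_def .
  also have "\<dots> \<le> (c * (norm (F v))^2) * R"
    using assms(3) R0 by (simp add: mult_right_mono)
  finally have "((norm (F v))^2)^2 \<le> (c * R) * (norm (F v))^2"
    by (simp add: cinner_self norm_power algebra_simps)
  then show ?thesis
  proof (cases "norm (F v) = 0")
    case True then show ?thesis using cR unfolding R_def by simp
  next
    case False
    then have "0 < (norm (F v))^2" by simp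
    with \<open>((norm (F v))^2)^2 \<le> (c * R) * (norm (F v))^2\<close> show ?thesis
      unfolding R_def by (metis mult_right_le_imp_le power2_eq_square)
  qed
qed

lemma sadj_mat: "hermitian_mat M \<Longrightarrow> sadj (\<lambda>w. M *v w)"
  unfolding sadj_def by (simp add: matrix_vector_right_distrib mv_scale herm_adj)

lemma ofreal_smult: "complex_of_real r *s (v::complex^'n) = r *\<^sub>R v"
  by (simp only: vec_eq_iff vector_smult_component vector_scaleR_component scaleR_conv_of_real[where 'a=complex]) simp

lemma sadj_shift:
  assumes "hermitian_mat M"
  shows "sadj (\<lambda>w. complex_of_real l *s w - M *v w)"
  unfolding sadj_def
  using herm_adj[OF assms]
  by (auto simp: matrix_vector_right_distrib mv_scale vector_ssub_ldistrib vector_add_ldistrib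
     cinner_diff_left cinner_diff_right cinner_scale_left cinner_scale_right vector_smult_assoc mult.commute)

lemma cont_quad: "continuous_on S (\<lambda>v. Re (cinner v ((M::complex^'n^'n) *v v)))"
  unfolding cinner_def matrix_vector_mult_def
  by (intro continuous_intros)

lemma quad_scale: "Re (cinner (complex_of_real r *s v) (M *v (complex_of_real r *s v))) = r^2 * Re (cinner v (M *v v))"
  by (simp add: mv_scale cinner_scale_left cinner_scale_right power2_eq_square)

lemma max_eig:
  fixes Z :: "complex^'n^'n"
  assumes "hermitian_mat Z"
  shows "\<exists>l x. x \<noteq> 0 \<and> Z *v x = complex_of_real l *s x \<and> (\<forall>v. Re (cinner v (Z *v v)) \<le> l * (norm v)^2)"
proof -
  let ?g = "\<lambda>v. Re (cinner v (Z *v v))"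
  have "sphere (0::complex^'n) 1 \<noteq> {}" by simp
  then obtain x0 where x0: "x0 \<in> sphere 0 1" and mx: "\<forall>y\<in>sphere 0 1. ?g y \<le> ?g x0"
    using continuous_attains_sup[OF compact_sphere _ cont_quad] by blast
  define l where "l = ?g x0"
  have nx0: "norm x0 = 1" using x0 by simp
  have bound: "?g v \<le> l * (norm v)^2" for v
  proof (cases "v = 0")
    case True then show ?thesis by simp
  next
    case False
    define u where "u = complex_of_real (1 / norm v) *s v"
    have "norm u = 1" unfolding u_def ofreal_smult using False by simp
    then have "?g u \<le> l" using mx unfolding l_def by simp
    moreover have "?g u = (1 / norm v)^2 * ?g v" unfolding u_def by (rule quad_scale)
    ultimately have "(1 / norm v)^2 * ?g v \<le> l" by simp
    then show ?thesis using False by (simp add: field_simps)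
  qed
  define F where "F = (\<lambda>w. complex_of_real l *s w - Z *v w)"
  have sF: "sadj F" unfolding F_def by (rule sadj_shift[OF assms])
  have qF: "Re (cinner w (F w)) = l * (norm w)^2 - ?g w" for w
    unfolding F_def by (simp add: cinner_diff_right cinner_scale_right cinner_self)
  have pF: "posf F" unfolding posf_def qF using bound by simp
  have "Re (cinner x0 (F x0)) = 0" using qF[of x0] nx0 unfolding l_def by simp
  then have "(cmod (cinner (F x0) (F x0)))^2 \<le> 0"
    using cs_form[OF sF pF, of "F x0" x0] by simp
  then have "F x0 = 0" by (simp add: cinner_self)
  then have "Z *v x0 = complex_of_real l *s x0" unfolding F_def by simp
  moreover have "x0 \<noteq> 0" using nx0 by auto
  ultimately show ?thesis using bound by blast
qed

lemma min_eig:
  fixes Z :: "complex^'n^'n"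
  assumes "hermitian_mat Z"
  shows "\<exists>l x. x \<noteq> 0 \<and> Z *v x = complex_of_real l *s x \<and> (\<forall>v. l * (norm v)^2 \<le> Re (cinner v (Z *v v)))"
proof -
  have "hermitian_mat (-Z)" unfolding hermitian_mat_def
  proof (intro allI)
    fix i j
    from assms have "Z$i$j = cnj (Z$j$i)" unfolding hermitian_mat_def by blast
    then show "(-Z)$i$j = cnj ((-Z)$j$i)" by simp
  qed
  from max_eig[OF this] obtain l x where "x \<noteq> 0" "(-Z) *v x = complex_of_real l *s x"
    "\<forall>v. Re (cinner v ((-Z) *v v)) \<le> l * (norm v)^2" by blast
  moreover have neg: "(-Z) *v w = - (Z *v w)" for w by (simp add: matrix_vector_mult_def vec_eq_iff sum_negf)
  moreover have cneg: "cinner v (- w) = - cinner v w" for v w :: "complex^'n" by (simp add: cinner_def sum_negf)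
  note hyps = calculation
  have e: "Z *v x = complex_of_real (-l) *s x"
  proof -
    have "Z *v x = - ((-Z) *v x)" using neg by simp
    also have "\<dots> = - (complex_of_real l *s x)" using hyps(2) by simp
    finally show ?thesis by (simp add: vector_smult_lneg)
  qed
  have b: "\<forall>v. (-l) * (norm v)^2 \<le> Re (cinner v (Z *v v))"
  proof
    fix v :: "complex^'n"
    have "Re (cinner v ((-Z) *v v)) = - Re (cinner v (Z *v v))" by (simp add: neg cneg)
    then show "(-l) * (norm v)^2 \<le> Re (cinner v (Z *v v))" using hyps(3) by (smt (verit) mult_minus_left)
  qed
  show ?thesis using \<open>x \<noteq> 0\<close> e b by blast
qed

lemma mat_surj:
  fixes Z :: "complex^'n^'n"
  assumes "\<And>v. Z *v v = 0 \<Longrightarrow> v = 0"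
  shows "\<exists>v. Z *v v = y"
proof -
  have lin: "linear (\<lambda>v. Z *v v)"
    unfolding linear_iff by (simp add: matrix_vector_right_distrib mv_scale ofreal_smult[symmetric])
  have "inj (\<lambda>v. Z *v v)"
  proof (rule injI)
    fix u w assume "Z *v u = Z *v w"
    then have "Z *v (u - w) = 0" by (simp add: matrix_vector_mult_diff_distrib)
    then show "u = w" using assms[of "u - w"] by simp
  qed
  then have "surj (\<lambda>v. Z *v v)" using linear_injective_imp_surjective[OF lin] by blast
  then show ?thesis by (metis surjD)
qed

lemma cinner_axis: "cinner (axis i 1) w = w $ i"
proof -
  have "\<And>k. cnj (axis i 1 $ k) * w $ k = (if k = i then w$i else 0)" by (simp add: axis_def)
  then show ?thesis unfolding cinner_def by simp
qed

lemma axis_cinner: "cinner w (axis i 1) = cnj (w $ i)"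
  by (metis cinner_commute cinner_axis)

lemma entry_cinner: "cinner (axis i 1) (M *v axis j 1) = M $ i $ j"
proof -
  have "\<And>k. M $ i $ k * axis j 1 $ k = (if k = j then M$i$j else 0)" by (simp add: axis_def)
  then show ?thesis by (simp add: cinner_axis matrix_vector_mult_def)
qed

lemma herm_of_adj:
  assumes "\<And>p q. cinner p (M *v q) = cinner (M *v p) q"
  shows "hermitian_mat M"
  unfolding hermitian_mat_def
proof (intro allI)
  fix i j
  have "M $ i $ j = cinner (axis i 1) (M *v axis j 1)" by (simp add: entry_cinner)
  also have "\<dots> = cinner (M *v axis i 1) (axis j 1)" by (rule assms)
  also have "\<dots> = cnj (cinner (axis j 1) (M *v axis i 1))" by (rule cinner_commute)
  finally show "M $ i $ j = cnj (M $ j $ i)" by (simp add: entry_cinner)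
qed

lemma core:
  fixes A Z :: "complex^'n^'n" and a b :: real
  assumes hA: "hermitian_mat A" and hZ: "hermitian_mat Z"
    and pA: "\<forall>v. 0 \<le> Re (cinner v (A *v v))"
    and uA: "\<forall>v. Re (cinner v (A *v v)) \<le> 1 * (norm v)^2"
    and pZ: "\<forall>v. 0 \<le> Re (cinner v (Z *v v))"
    and upZ: "\<forall>v. Re (cinner v (Z *v v)) \<le> a * (norm v)^2"
    and loZ: "\<forall>v. b * (norm v)^2 \<le> Re (cinner v (Z *v v))"
    and b0: "0 < b" and ab: "b \<le> a"
    and sur: "\<forall>y. \<exists>v. Z *v v = y"
  shows "Re (cinner (A *v x) (Z *v (A *v x))) \<le> ((a+b)^2/(4*a*b)) * Re (cinner x (Z *v x))"
proof -
  define y where "y = A *v x"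
  obtain v where v: "Z *v v = y" using sur by blast
  define w where "w = Z *v y"
  define al where "al = Re (cinner x (Z *v x))"
  define be where "be = Re (cinner v y)"
  define ga where "ga = Re (cinner y w)"
  define Y where "Y = (norm y)^2"
  define V where "V = (norm v)^2"
  have sA: "sadj (\<lambda>w. A *v w)" by (rule sadj_mat[OF hA])
  have sZ: "sadj (\<lambda>w. Z *v w)" by (rule sadj_mat[OF hZ])
  have posA: "posf (\<lambda>w. A *v w)" using pA unfolding posf_def by simp
  have posZ: "posf (\<lambda>w. Z *v w)" using pZ unfolding posf_def by simp
  have al0: "0 \<le> al" using pZ unfolding al_def by simp
  have be0: "0 \<le> be" using pZ v unfolding be_def by metis
  have ga0: "0 \<le> ga" using pZ unfolding ga_def w_def by simp
  have Y0: "0 \<le> Y" unfolding Y_def by simp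
  have a0: "0 < a" using ab b0 by simp
  have s1: "Y \<le> Re (cinner x y)"
    using sq_bound[OF sA posA uA, of x] unfolding Y_def y_def by simp
  have "(cmod (cinner x (Z *v v)))^2 \<le> al * be"
    using cs_form[OF sZ posZ, of x v] unfolding al_def be_def v by simp
  then have cs: "(cmod (cinner x y))^2 \<le> al * be" using v by simp
  have "Y \<le> cmod (cinner x y)" using s1 complex_Re_le_cmod by (rule order_trans)
  then have "Y^2 \<le> (cmod (cinner x y))^2" using Y0 by (simp add: power_mono)
  with cs have s2: "Y^2 \<le> al * be" by simp
  define F where "F = (\<lambda>w. complex_of_real a *s w - Z *v w)"
  have sF: "sadj F" unfolding F_def by (rule sadj_shift[OF hZ])
  have qF: "Re (cinner u (F u)) = a * (norm u)^2 - Re (cinner u (Z *v u))" for u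
    unfolding F_def by (simp add: cinner_diff_right cinner_scale_right cinner_self)
  have pF: "posf F" unfolding posf_def qF using upZ by simp
  have uF: "\<forall>u. Re (cinner u (F u)) \<le> (a - b) * (norm u)^2" unfolding qF using loZ
    by (simp add: algebra_simps)
  have "(norm (F v))^2 \<le> (a - b) * Re (cinner v (F v))" by (rule sq_bound[OF sF pF uF])
  moreover have "Re (cinner v (F v)) = a * V - be" unfolding qF V_def be_def v ..
  moreover have "(norm (F v))^2 = a^2 * V - 2 * a * be + Y"
  proof -
    have Fv: "F v = complex_of_real a *s v - y" unfolding F_def v ..
    have "(norm (F v))^2 = Re (cinner (F v) (F v))" by (simp add: cinner_self)
    also have "cinner (F v) (F v) = complex_of_real (a^2) * cinner v v - complex_of_real a * cinner v y
        - complex_of_real a * cinner y v + cinner y y"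
      unfolding Fv by (simp add: cinner_diff_left cinner_diff_right cinner_scale_left cinner_scale_right algebra_simps power2_eq_square)
    also have "Re (cinner y v) = be" unfolding be_def by (subst cinner_commute) simp
    then have "Re (complex_of_real (a^2) * cinner v v - complex_of_real a * cinner v y
        - complex_of_real a * cinner y v + cinner y y) = a^2 * V - 2 * a * be + Y"
      unfolding V_def Y_def be_def by (simp add: cinner_self)
    finally show ?thesis .
  qed
  ultimately have f2: "Y - (a + b) * be + a * b * V \<le> 0"
    by (simp add: algebra_simps power2_eq_square)
  define p where "p = y - complex_of_real b *s v"
  have Zp: "Z *v p = w - complex_of_real b *s y"
    unfolding p_def w_def by (simp add: matrix_vector_mult_diff_distrib mv_scale v)
  have vw: "cinner v w = cinner y y" unfolding w_def using herm_adj[OF hZ, of v y] v by simp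
  have "Re (cinner p (Z *v p)) \<le> a * (norm p)^2" using upZ by blast
  moreover have "Re (cinner p (Z *v p)) = ga - 2 * b * Y + b^2 * be"
  proof -
    have "cinner p (Z *v p) = cinner y w - complex_of_real b * cinner y y - complex_of_real b * cinner v w
         + complex_of_real (b^2) * cinner v y"
      unfolding Zp by (simp add: p_def cinner_diff_left cinner_diff_right cinner_scale_left cinner_scale_right algebra_simps power2_eq_square)
    then show ?thesis unfolding vw ga_def Y_def be_def by (simp add: cinner_self)
  qed
  moreover have "(norm p)^2 = Y - 2 * b * be + b^2 * V"
  proof -
    have "(norm p)^2 = Re (cinner p p)" by (simp add: cinner_self)
    also have "cinner p p = cinner y y - complex_of_real b * cinner v y - complex_of_real b * cinner y v
         + complex_of_real (b^2) * cinner v v"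
      unfolding p_def by (simp add: cinner_diff_left cinner_diff_right cinner_scale_left cinner_scale_right algebra_simps power2_eq_square)
    also have "Re (cinner y v) = be" unfolding be_def by (subst cinner_commute) simp
    then have "Re (cinner y y - complex_of_real b * cinner v y - complex_of_real b * cinner y v
         + complex_of_real (b^2) * cinner v v) = Y - 2 * b * be + b^2 * V"
      unfolding V_def Y_def be_def by (simp add: cinner_self)
    finally show ?thesis .
  qed
  ultimately have f1: "ga - 2 * b * Y + b^2 * be \<le> a * (Y - 2 * b * be + b^2 * V)" by simp
  have "b * (Y - (a + b) * be + a * b * V) \<le> 0" using f2 b0 by (simp add: mult_nonneg_nonpos)
  with f1 have kant: "ga + a * b * be \<le> (a + b) * Y"
    by (simp add: algebra_simps power2_eq_square)
  have "4 * a * b * ga * be \<le> (ga + a * b * be)^2"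
  proof -
    have "0 \<le> (ga - a * b * be)^2" by simp
    then show ?thesis by (simp add: algebra_simps power2_eq_square)
  qed
  also have "\<dots> \<le> ((a + b) * Y)^2"
    using kant ga0 be0 a0 b0 by (intro power_mono) auto
  also have "\<dots> = (a + b)^2 * Y^2" by (simp add: power_mult_distrib)
  also have "\<dots> \<le> (a + b)^2 * (al * be)" using s2 by (simp add: mult_left_mono)
  finally have main: "(4 * a * b * ga) * be \<le> ((a + b)^2 * al) * be" by (simp add: algebra_simps)
  have "ga \<le> ((a+b)^2/(4*a*b)) * al"
  proof (cases "be = 0")
    case True
    then have "Y^2 \<le> 0" using s2 by simp
    then have "y = 0" using Y0 unfolding Y_def by simp
    then have "ga = 0" unfolding ga_def by simp
    then show ?thesis using al0 a0 b0 by simp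
  next
    case False
    then have "0 < be" using be0 by simp
    then have "4 * a * b * ga \<le> (a + b)^2 * al" using main by simp
    then show ?thesis using a0 b0 by (simp add: field_simps)
  qed
  then show ?thesis unfolding ga_def y_def w_def al_def .
qed

lemma mv_scaleR_mat: "((r::real) *\<^sub>R (M::complex^'n^'n)) *v q = complex_of_real r *s (M *v q)"
  by (simp add: vec_eq_iff matrix_vector_mult_def sum_distrib_left scaleR_conv_of_real[where 'a=complex] mult.assoc)

lemma psd_parts:
  assumes "psd_mat M"
  shows "hermitian_mat M" "\<forall>v. 0 \<le> Re (cinner v (M *v v))"
  using assms unfolding psd_mat_def cquad_cinner by auto

theorem corollary1p5:
  fixes A Z :: "complex^'n^'n" and a b :: real
  assumes "loewner_le 0 A" and "loewner_le A (mat 1)"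
    and "pd_mat Z"
    and "mat_eigenvalue Z (complex_of_real a)"
    and "\<forall>l. mat_eigenvalue Z l \<longrightarrow> Re l \<le> a"
    and "mat_eigenvalue Z (complex_of_real b)"
    and "\<forall>l. mat_eigenvalue Z l \<longrightarrow> b \<le> Re l"
  shows "loewner_le (A ** Z ** A) (((a + b)^2 / (4 * a * b)) *\<^sub>R Z)"
proof -
  define K where "K = (a + b)^2 / (4 * a * b)"
  have psA: "psd_mat A" using assms(1) unfolding loewner_le_def by simp
  have hA: "hermitian_mat A" and pA: "\<forall>v. 0 \<le> Re (cinner v (A *v v))" using psd_parts[OF psA] by auto
  have "\<forall>v. 0 \<le> Re (cinner v ((mat 1 - A) *v v))"
    using psd_parts(2) assms(2) unfolding loewner_le_def by blast
  then have uA: "\<forall>v. Re (cinner v (A *v v)) \<le> 1 * (norm v)^2"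
    by (simp add: matrix_vector_mult_diff_rdistrib cinner_diff_right cinner_self)
  have hZ: "hermitian_mat Z" and pdZ: "\<forall>v. v \<noteq> 0 \<longrightarrow> 0 < Re (cinner v (Z *v v))"
    using assms(3) unfolding pd_mat_def cquad_cinner by auto
  have pZ: "\<forall>v. 0 \<le> Re (cinner v (Z *v v))"
  proof
    fix v :: "complex^'n"
    show "0 \<le> Re (cinner v (Z *v v))" using pdZ by (cases "v = 0") (auto intro: less_imp_le)
  qed
  obtain l1 x1 where x1: "x1 \<noteq> 0" "Z *v x1 = complex_of_real l1 *s x1"
    and b1: "\<forall>v. Re (cinner v (Z *v v)) \<le> l1 * (norm v)^2" using max_eig[OF hZ] by blast
  have "l1 \<le> a" using assms(5) x1 unfolding mat_eigenvalue_def by force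
  then have upZ: "\<forall>v. Re (cinner v (Z *v v)) \<le> a * (norm v)^2"
    using b1 by (meson mult_right_mono order_trans zero_le_power2)
  obtain l2 x2 where x2: "x2 \<noteq> 0" "Z *v x2 = complex_of_real l2 *s x2"
    and b2: "\<forall>v. l2 * (norm v)^2 \<le> Re (cinner v (Z *v v))" using min_eig[OF hZ] by blast
  have "b \<le> l2" using assms(7) x2 unfolding mat_eigenvalue_def by force
  then have loZ: "\<forall>v. b * (norm v)^2 \<le> Re (cinner v (Z *v v))"
    using b2 by (meson mult_right_mono order_trans zero_le_power2)
  obtain vb where vb: "vb \<noteq> 0" "Z *v vb = complex_of_real b *s vb"
    using assms(6) unfolding mat_eigenvalue_def by blast
  have "0 < Re (cinner vb (Z *v vb))" using pdZ vb by blast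
  also have "Re (cinner vb (Z *v vb)) = b * (norm vb)^2"
    using vb by (simp add: cinner_scale_right cinner_self)
  finally have b0: "0 < b" using vb by (simp add: zero_less_mult_iff)
  have ab: "b \<le> a" using assms(5) assms(6) by force
  have sur: "\<forall>y. \<exists>v. Z *v v = y"
  proof
    fix y :: "complex^'n"
    show "\<exists>v. Z *v v = y"
    proof (rule mat_surj)
      fix v :: "complex^'n" assume "Z *v v = 0"
      show "v = 0"
      proof (rule ccontr)
        assume "v \<noteq> 0"
        then have "0 < Re (cinner v (Z *v v))" using pdZ by blast
        with \<open>Z *v v = 0\<close> show False by simp
      qed
    qed
  qed
  have mv: "(K *\<^sub>R Z - A ** Z ** A) *v q = complex_of_real K *s (Z *v q) - A *v (Z *v (A *v q))" for q
    by (simp add: matrix_vector_mult_diff_rdistrib mv_scaleR_mat matrix_vector_mul_assoc matrix_mul_assoc)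
  have herm: "hermitian_mat (K *\<^sub>R Z - A ** Z ** A)"
  proof (rule herm_of_adj)
    fix p q :: "complex^'n"
    show "cinner p ((K *\<^sub>R Z - A ** Z ** A) *v q) = cinner ((K *\<^sub>R Z - A ** Z ** A) *v p) q"
      unfolding mv
      by (simp add: cinner_diff_left cinner_diff_right cinner_scale_left cinner_scale_right
          herm_adj[OF hA] herm_adj[OF hZ])
  qed
  have "0 \<le> Re (cquad (K *\<^sub>R Z - A ** Z ** A) x)" for x
  proof -
    have c: "Re (cinner (A *v x) (Z *v (A *v x))) \<le> K * Re (cinner x (Z *v x))"
      unfolding K_def by (rule core[OF hA hZ pA uA pZ upZ loZ b0 ab sur])
    have "cinner x (A *v (Z *v (A *v x))) = cinner (A *v x) (Z *v (A *v x))"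
      by (rule herm_adj[OF hA])
    then show ?thesis using c
      unfolding cquad_cinner mv by (simp add: cinner_diff_right cinner_scale_right)
  qed
  then show ?thesis using herm unfolding loewner_le_def psd_mat_def K_def by blast
qed

end
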